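(* Let $\pi$ be a set of primes and $G$ a group. Let $A$ be a $\mathbb ZG$-module whose additive group is divisible, and let $B$ be a finite $\mathbb ZG$-submodule of $A$. Suppose there is a $\mathbb ZG$-module epimorphism $\theta:U\to A/B$, where $U$ is a $\mathbb ZG$-module whose additive group is torsion-free of finite rank and $\pi$-spectral. Then $A$ is a $\mathbb ZG$-module quotient of some $\mathbb ZG$-module whose additive group is torsion-free of finite rank and $\pi$-spectral.
   Context: An abelian group has finite rank if its torsion-free rank and all $p$-ranks are finite; it is $\pi$-spectral if every prime $p$ for which it has a section isomorphic to $\mathbb Z_{p^\infty}$ lies in $\pi$. *)

theory Defs
  imports "HOL-Algebra.Algebra"
begin

text \<open>Abelian groups are HOL-Algebra commutative groups (written multiplicatively:
  the group operation of the record plays the role of addition).\<close>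

definition ZG_module :: "('g, 'x) monoid_scheme \<Rightarrow> ('m, 'y) monoid_scheme \<Rightarrow> ('g \<Rightarrow> 'm \<Rightarrow> 'm) \<Rightarrow> bool" where
  "ZG_module G M act \<longleftrightarrow> group G \<and> comm_group M \<and>
     (\<forall>g\<in>carrier G. act g \<in> hom M M) \<and>
     (\<forall>x\<in>carrier M. act \<one>\<^bsub>G\<^esub> x = x) \<and>
     (\<forall>g\<in>carrier G. \<forall>h\<in>carrier G. \<forall>x\<in>carrier M.
        act (g \<otimes>\<^bsub>G\<^esub> h) x = act g (act h x))"

definition ZG_submodule :: "('g, 'x) monoid_scheme \<Rightarrow> 'm set \<Rightarrow> ('m, 'y) monoid_scheme \<Rightarrow> ('g \<Rightarrow> 'm \<Rightarrow> 'm) \<Rightarrow> bool" where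
  "ZG_submodule G B M act \<longleftrightarrow> subgroup B M \<and> (\<forall>g\<in>carrier G. \<forall>b\<in>B. act g b \<in> B)"

definition ZG_hom :: "('g, 'x) monoid_scheme \<Rightarrow> ('m, 'y) monoid_scheme \<Rightarrow> ('g \<Rightarrow> 'm \<Rightarrow> 'm)
    \<Rightarrow> ('n, 'z) monoid_scheme \<Rightarrow> ('g \<Rightarrow> 'n \<Rightarrow> 'n) \<Rightarrow> ('m \<Rightarrow> 'n) \<Rightarrow> bool" where
  "ZG_hom G M actM N actN f \<longleftrightarrow> f \<in> hom M N \<and>
     (\<forall>g\<in>carrier G. \<forall>x\<in>carrier M. f (actM g x) = actN g (f x))"

definition ZG_epi :: "('g, 'x) monoid_scheme \<Rightarrow> ('m, 'y) monoid_scheme \<Rightarrow> ('g \<Rightarrow> 'm \<Rightarrow> 'm)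
    \<Rightarrow> ('n, 'z) monoid_scheme \<Rightarrow> ('g \<Rightarrow> 'n \<Rightarrow> 'n) \<Rightarrow> ('m \<Rightarrow> 'n) \<Rightarrow> bool" where
  "ZG_epi G M actM N actN f \<longleftrightarrow> ZG_hom G M actM N actN f \<and> f ` carrier M = carrier N"

text \<open>The induced action on the quotient module M/B (carrier: cosets of B):
  g acts on the coset B a by taking its image under the action of g,
  which is the coset B (g a) since B is a ZG-submodule.\<close>

definition quot_act :: "('g \<Rightarrow> 'm \<Rightarrow> 'm) \<Rightarrow> 'g \<Rightarrow> 'm set \<Rightarrow> 'm set" where
  "quot_act act g C = act g ` C"

definition divisible_group :: "('m, 'y) monoid_scheme \<Rightarrow> bool" where
  "divisible_group M \<longleftrightarrow>
     (\<forall>x\<in>carrier M. \<forall>n::nat. n > 0 \<longrightarrow> (\<exists>y\<in>carrier M. y [^]\<^bsub>M\<^esub> n = x))"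

definition torsion_free :: "('m, 'y) monoid_scheme \<Rightarrow> bool" where
  "torsion_free M \<longleftrightarrow>
     (\<forall>x\<in>carrier M. \<forall>n::nat. n > 0 \<longrightarrow> x [^]\<^bsub>M\<^esub> n = \<one>\<^bsub>M\<^esub> \<longrightarrow> x = \<one>\<^bsub>M\<^esub>)"

definition lin_indep :: "('m, 'y) monoid_scheme \<Rightarrow> 'm set \<Rightarrow> bool" where
  "lin_indep M S \<longleftrightarrow> finite S \<and> S \<subseteq> carrier M \<and>
     (\<forall>c::'m \<Rightarrow> int. finprod M (\<lambda>s. s [^]\<^bsub>M\<^esub> c s) S = \<one>\<^bsub>M\<^esub> \<longrightarrow> (\<forall>s\<in>S. c s = 0))"

definition finite_torsion_free_rank :: "('m, 'y) monoid_scheme \<Rightarrow> bool" where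
  "finite_torsion_free_rank M \<longleftrightarrow> (\<exists>N::nat. \<forall>S. lin_indep M S \<longrightarrow> card S \<le> N)"

text \<open>The p-rank is the F_p-dimension of M[p] = {x. x^p = 1}; it is finite iff M[p] is finite.\<close>

definition finite_p_rank :: "('m, 'y) monoid_scheme \<Rightarrow> nat \<Rightarrow> bool" where
  "finite_p_rank M p \<longleftrightarrow> finite {x\<in>carrier M. x [^]\<^bsub>M\<^esub> p = \<one>\<^bsub>M\<^esub>}"

definition finite_rank :: "('m, 'y) monoid_scheme \<Rightarrow> bool" where
  "finite_rank M \<longleftrightarrow> finite_torsion_free_rank M \<and> (\<forall>p. Factorial_Ring.prime p \<longrightarrow> finite_p_rank M p)"

text \<open>The Pruefer p-group Z_{p^infinity}, realised as the rationals in [0,1) with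
  p-power denominator, under addition modulo 1.\<close>

definition Pruefer :: "nat \<Rightarrow> rat monoid" where
  "Pruefer p = \<lparr>carrier = {q::rat. 0 \<le> q \<and> q < 1 \<and> (\<exists>k::nat. q * of_nat p ^ k \<in> \<int>)},
               monoid.mult = (\<lambda>x y. frac (x + y)), one = 0\<rparr>"

definition has_Pruefer_section :: "('m, 'y) monoid_scheme \<Rightarrow> nat \<Rightarrow> bool" where
  "has_Pruefer_section M p \<longleftrightarrow>
     (\<exists>H K. subgroup H M \<and> subgroup K (M\<lparr>carrier := H\<rparr>) \<and>
            ((M\<lparr>carrier := H\<rparr>) Mod K) \<cong> Pruefer p)"

definition pi_spectral :: "nat set \<Rightarrow> ('m, 'y) monoid_scheme \<Rightarrow> bool" where
  "pi_spectral \<pi> M \<longleftrightarrow> (\<forall>p. Factorial_Ring.prime p \<and> has_Pruefer_section M p \<longrightarrow> p \<in> \<pi>)"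

end

theory Submission
  imports Defs
begin


lemma tr_simps[simp]: "carrier (monoid.truncate M) = carrier M" "monoid.mult (monoid.truncate M) = monoid.mult M"
  "\<one>\<^bsub>monoid.truncate M\<^esub> = \<one>\<^bsub>M\<^esub>"
  by (simp_all add: monoid.truncate_def)
lemma tr_natpow[simp]: "x [^]\<^bsub>monoid.truncate M\<^esub> (n::nat) = x [^]\<^bsub>M\<^esub> n"
  by (simp add: nat_pow_def)
lemma tr_inv[simp]: "m_inv (monoid.truncate M) = m_inv M"
  by (simp add: m_inv_def fun_eq_iff)
lemma tr_intpow[simp]: "x [^]\<^bsub>monoid.truncate M\<^esub> (n::int) = x [^]\<^bsub>M\<^esub> n"
  by (simp only: int_pow_def2 tr_inv tr_natpow)
lemma tr_finprod[simp]: "finprod (monoid.truncate M) f S = finprod M f S"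
  by (simp add: finprod_def)
lemma tr_hom1[simp]: "hom (monoid.truncate M) Y = hom M Y"
  by (simp add: hom_def)
lemma tr_hom2[simp]: "hom Y (monoid.truncate M) = hom Y M"
  by (simp add: hom_def)
lemma tr_Units[simp]: "Units (monoid.truncate M) = Units M"
  by (simp add: Units_def)
lemma tr_monoid[simp]: "monoid (monoid.truncate M) = monoid M"
  unfolding monoid_def tr_simps by (rule refl)
lemma tr_group[simp]: "group (monoid.truncate M) = group M"
  unfolding group_def group_axioms_def tr_monoid tr_simps tr_Units by (rule refl)
lemma tr_comm_group[simp]: "comm_group (monoid.truncate M) = comm_group M"
  unfolding comm_group_def comm_monoid_def comm_monoid_axioms_def tr_group tr_monoid tr_simps by (rule refl)
lemma tr_subgroup[simp]: "subgroup H (monoid.truncate M) = subgroup H M"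
  by (simp add: subgroup_def)
lemma tr_upd[simp]: "(monoid.truncate M)\<lparr>carrier := H\<rparr> = monoid.truncate (M\<lparr>carrier := H\<rparr>)"
  by (simp add: monoid.truncate_def)
lemma tr_setmult[simp]: "set_mult (monoid.truncate M) = set_mult M"
  by (simp add: set_mult_def fun_eq_iff)
lemma tr_Fact[simp]: "monoid.truncate M Mod K = M Mod K"
  by (simp add: FactGroup_def RCOSETS_def r_coset_def)
lemma tr_spec: "pi_spectral \<pi> (monoid.truncate M) = pi_spectral \<pi> M"
  by (simp add: pi_spectral_def has_Pruefer_section_def)
lemma tr_rank: "finite_rank (monoid.truncate M) = finite_rank M"
  by (simp add: finite_rank_def finite_torsion_free_rank_def lin_indep_def finite_p_rank_def)
lemma tr_tf: "torsion_free (monoid.truncate M) = torsion_free M"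
  by (simp add: torsion_free_def)

lemma kill_B:
  assumes "group A" "subgroup B A" "finite B" "b \<in> B"
  shows "b [^]\<^bsub>A\<^esub> card B = \<one>\<^bsub>A\<^esub>"
proof -
  have g: "group (A\<lparr>carrier := B\<rparr>)" using subgroup.subgroup_is_group[OF assms(2,1)] .
  have "b [^]\<^bsub>A\<lparr>carrier := B\<rparr>\<^esub> order (A\<lparr>carrier := B\<rparr>) = \<one>\<^bsub>A\<lparr>carrier := B\<rparr>\<^esub>"
    using group.pow_order_eq_1[OF g] assms(4) by simp
  then show ?thesis
    using monoid.nat_pow_consistent[OF group.is_monoid[OF assms(1)], of b "card B" B]
    by (simp add: order_def)
qed

lemma coset_rep:
  assumes "C \<in> carrier (A Mod B)" "group A" "subgroup B A"
  shows "\<exists>a\<in>carrier A. a \<in> C \<and> C = B #>\<^bsub>A\<^esub> a"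
proof -
  from assms(1) obtain a where a: "a \<in> carrier A" "C = B #>\<^bsub>A\<^esub> a"
    by (auto simp: FactGroup_def RCOSETS_def)
  then show ?thesis using group.rcos_self[OF assms(2) a(1) assms(3)] by blast
qed

lemma coset_pow:
  assumes "C \<in> carrier (A Mod B)" "comm_group A" "subgroup B A" "finite B" "x \<in> C"
  shows "x \<in> carrier A \<and> x [^]\<^bsub>A\<^esub> card B = (SOME y. y \<in> C) [^]\<^bsub>A\<^esub> card B"
proof -
  have gA: "group A" using assms(2) comm_group.axioms(2) by blast
  obtain a where a: "a \<in> carrier A" "C = B #>\<^bsub>A\<^esub> a"
    using coset_rep[OF assms(1) gA assms(3)] by blast
  have key: "y \<in> C \<Longrightarrow> y \<in> carrier A \<and> y [^]\<^bsub>A\<^esub> card B = a [^]\<^bsub>A\<^esub> card B" for y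
  proof -
    assume "y \<in> C"
    then obtain h where h: "h \<in> B" "y = h \<otimes>\<^bsub>A\<^esub> a" using a by (auto simp: r_coset_def)
    have hc: "h \<in> carrier A" using h(1) assms(3) subgroup.subset by blast
    have "y [^]\<^bsub>A\<^esub> card B = h [^]\<^bsub>A\<^esub> card B \<otimes>\<^bsub>A\<^esub> a [^]\<^bsub>A\<^esub> card B"
      using comm_monoid.nat_pow_distrib[OF comm_group.axioms(1)[OF assms(2)] hc a(1)] h by simp
    also have "\<dots> = a [^]\<^bsub>A\<^esub> card B"
      using kill_B[OF gA assms(3,4) h(1)] a(1)
      by (simp add: monoid.l_one[OF group.is_monoid[OF gA]] monoid.nat_pow_closed[OF group.is_monoid[OF gA]])
    finally show ?thesis using h hc a(1) gA by (simp add: group.is_monoid monoid.m_closed)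
  qed
  have "(SOME y. y \<in> C) \<in> C" using assms(5) by (rule someI)
  then show ?thesis using key[OF assms(5)] key by metis
qed

theorem lemma4p5:
  fixes \<pi> :: "nat set"
    and G :: "('g, 'x) monoid_scheme"
    and A :: "('a, 'y) monoid_scheme" and actA :: "'g \<Rightarrow> 'a \<Rightarrow> 'a"
    and B :: "'a set"
    and U :: "('u, 'z) monoid_scheme" and actU :: "'g \<Rightarrow> 'u \<Rightarrow> 'u"
    and \<theta> :: "'u \<Rightarrow> 'a set"
  assumes "\<forall>p\<in>\<pi>. Factorial_Ring.prime p"
    and "group G"
    and "ZG_module G A actA"
    and "divisible_group A"
    and "ZG_submodule G B A actA"
    and "finite B"
    and "ZG_module G U actU"
    and "torsion_free U" and "finite_rank U" and "pi_spectral \<pi> U"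
    and "ZG_epi G U actU (A Mod B) (quot_act actA) \<theta>"
  shows "\<exists>(V :: 'u monoid) actV (\<phi> :: 'u \<Rightarrow> 'a).
           ZG_module G V actV \<and> torsion_free V \<and> finite_rank V \<and> pi_spectral \<pi> V \<and>
           ZG_epi G V actV A actA \<phi>"
proof -
  define m where "m = card B"
  define \<psi> where "\<psi> u = (SOME y. y \<in> \<theta> u) [^]\<^bsub>A\<^esub> m" for u
  have cA: "comm_group A" and gA: "group A" and actAh: "\<And>g. g \<in> carrier G \<Longrightarrow> actA g \<in> hom A A"
    using assms(3) comm_group.axioms(2) unfolding ZG_module_def by blast+
  have gU: "group U" and actUh: "\<And>g. g \<in> carrier G \<Longrightarrow> actU g \<in> hom U U"
    using assms(7) comm_group.axioms(2) unfolding ZG_module_def by blast+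
  have sB: "subgroup B A" using assms(5) unfolding ZG_submodule_def by blast
  have thh: "\<theta> \<in> hom U (A Mod B)" and tha: "\<And>g u. g \<in> carrier G \<Longrightarrow> u \<in> carrier U \<Longrightarrow>
      \<theta> (actU g u) = quot_act actA g (\<theta> u)" and ths: "\<theta> ` carrier U = carrier (A Mod B)"
    using assms(11) unfolding ZG_epi_def ZG_hom_def by blast+
  have thc: "u \<in> carrier U \<Longrightarrow> \<theta> u \<in> carrier (A Mod B)" for u using thh by (auto simp: hom_def)
  have psi: "u \<in> carrier U \<Longrightarrow> x \<in> \<theta> u \<Longrightarrow> x \<in> carrier A \<and> \<psi> u = x [^]\<^bsub>A\<^esub> m" for u x
    using coset_pow[OF thc cA sB assms(6)] by (simp add: \<psi>_def m_def)
  have rep: "u \<in> carrier U \<Longrightarrow> \<exists>a. a \<in> \<theta> u" for u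
    using coset_rep[OF thc gA sB] by blast
  have psic: "u \<in> carrier U \<Longrightarrow> \<psi> u \<in> carrier A" for u
  proof -
    assume u: "u \<in> carrier U"
    obtain a where "a \<in> \<theta> u" using rep[OF u] by blast
    then show ?thesis using psi[OF u] monoid.nat_pow_closed[OF group.is_monoid[OF gA]] by auto
  qed
  have hom: "\<psi> \<in> hom U A"
  proof (rule homI)
    fix u assume "u \<in> carrier U" then show "\<psi> u \<in> carrier A" by (rule psic)
  next
    fix u v assume u: "u \<in> carrier U" and v: "v \<in> carrier U"
    obtain a where a: "a \<in> \<theta> u" using rep[OF u] by blast
    obtain b where b: "b \<in> \<theta> v" using rep[OF v] by blast
    have ac: "a \<in> carrier A" and pa: "\<psi> u = a [^]\<^bsub>A\<^esub> m" using psi[OF u a] by auto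
    have bc: "b \<in> carrier A" and pb: "\<psi> v = b [^]\<^bsub>A\<^esub> m" using psi[OF v b] by auto
    have uv: "u \<otimes>\<^bsub>U\<^esub> v \<in> carrier U" using u v gU by (simp add: group.is_monoid monoid.m_closed)
    have "\<theta> (u \<otimes>\<^bsub>U\<^esub> v) = \<theta> u <#>\<^bsub>A\<^esub> \<theta> v"
      using thh u v by (simp add: hom_def FactGroup_def)
    then have "a \<otimes>\<^bsub>A\<^esub> b \<in> \<theta> (u \<otimes>\<^bsub>U\<^esub> v)" using a b by (auto simp: set_mult_def)
    then have "\<psi> (u \<otimes>\<^bsub>U\<^esub> v) = (a \<otimes>\<^bsub>A\<^esub> b) [^]\<^bsub>A\<^esub> m" using psi[OF uv] by blast
    also have "\<dots> = \<psi> u \<otimes>\<^bsub>A\<^esub> \<psi> v"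
      using comm_monoid.nat_pow_distrib[OF comm_group.axioms(1)[OF cA] ac bc] pa pb by simp
    finally show "\<psi> (u \<otimes>\<^bsub>U\<^esub> v) = \<psi> u \<otimes>\<^bsub>A\<^esub> \<psi> v" .
  qed
  have act: "\<psi> (actU g u) = actA g (\<psi> u)" if g: "g \<in> carrier G" and u: "u \<in> carrier U" for g u
  proof -
    obtain a where a: "a \<in> \<theta> u" using rep[OF u] by blast
    have ac: "a \<in> carrier A" and pa: "\<psi> u = a [^]\<^bsub>A\<^esub> m" using psi[OF u a] by auto
    have gu: "actU g u \<in> carrier U" using actUh[OF g] u by (auto simp: hom_def)
    have "actA g a \<in> \<theta> (actU g u)" using tha[OF g u] a by (simp add: quot_act_def)
    then have "\<psi> (actU g u) = actA g a [^]\<^bsub>A\<^esub> m" using psi[OF gu] by blast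
    also have "\<dots> = actA g (a [^]\<^bsub>A\<^esub> m)" using hom_nat_pow[OF actAh[OF g] ac gA gA] by simp
    finally show ?thesis using pa by simp
  qed
  have surj: "\<psi> ` carrier U = carrier A"
  proof
    show "\<psi> ` carrier U \<subseteq> carrier A" using psic by blast
  next
    show "carrier A \<subseteq> \<psi> ` carrier U"
    proof
      fix y assume y: "y \<in> carrier A"
      have "\<one>\<^bsub>A\<^esub> \<in> B" using sB subgroup.one_closed by blast
      then have "m > 0" using assms(6) unfolding m_def by (auto simp: card_gt_0_iff)
      then obtain x where x: "x \<in> carrier A" "x [^]\<^bsub>A\<^esub> m = y"
        using assms(4) y unfolding divisible_group_def by blast
      have "B #>\<^bsub>A\<^esub> x \<in> carrier (A Mod B)" using x(1) by (auto simp: FactGroup_def RCOSETS_def)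
      then have "B #>\<^bsub>A\<^esub> x \<in> \<theta> ` carrier U" using ths by simp
      then obtain u where u: "u \<in> carrier U" "\<theta> u = B #>\<^bsub>A\<^esub> x" by blast
      have "x \<in> \<theta> u" using u(2) group.rcos_self[OF gA x(1) sB] by simp
      then have "\<psi> u = y" using psi[OF u(1)] x by blast
      then show "y \<in> \<psi> ` carrier U" using u(1) by blast
    qed
  qed
  have "ZG_module G (monoid.truncate U) actU" using assms(7) by (simp add: ZG_module_def)
  moreover have "ZG_epi G (monoid.truncate U) actU A actA \<psi>"
    using hom act surj by (simp add: ZG_epi_def ZG_hom_def)
  moreover have "torsion_free (monoid.truncate U)" using assms(8) by (simp only: tr_tf)
  moreover have "finite_rank (monoid.truncate U)" using assms(9) by (simp only: tr_rank)
  moreover have "pi_spectral \<pi> (monoid.truncate U)" using assms(10) by (simp only: tr_spec)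
  ultimately show ?thesis by blast
qed

end
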